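(* For every locally finite group $G$ there are a locally finite group $G^+$ containing $G$ as a subgroup and an element $a \in G^+$ such that: $G^+ = \langle G \cup \{a\}\rangle_{G^+}$; $a$ does not commute with any $b \in G \setminus \{e_G\}$; $a$ has order $2$; and the subgroups $G$ and $a^{-1}Ga$ commute elementwise in $G^+$.
   Context: A group is locally finite if every finitely generated subgroup is finite. *)

theory Defs
  imports "HOL-Algebra.Algebra"
begin

definition locally_finite_group :: "('a, 'b) monoid_scheme \<Rightarrow> bool" where
  "locally_finite_group G \<longleftrightarrow> group G \<and>
     (\<forall>S. S \<subseteq> carrier G \<and> finite S \<longrightarrow> finite (generate G S))"

end

theory Submission imports Defs begin

definition wmult :: "('a, 'b) monoid_scheme \<Rightarrow> 'a \<times> 'a \<times> bool \<Rightarrow> 'a \<times> 'a \<times> bool \<Rightarrow> 'a \<times> 'a \<times> bool" where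
  "wmult G p q = (case p of (x1,y1,s1) \<Rightarrow> case q of (x2,y2,s2) \<Rightarrow>
     if s1 then (x1 \<otimes>\<^bsub>G\<^esub> y2, y1 \<otimes>\<^bsub>G\<^esub> x2, s1 \<noteq> s2)
     else (x1 \<otimes>\<^bsub>G\<^esub> x2, y1 \<otimes>\<^bsub>G\<^esub> y2, s1 \<noteq> s2))"

definition W :: "('a, 'b) monoid_scheme \<Rightarrow> ('a \<times> 'a \<times> bool) monoid" where
  "W G = \<lparr>carrier = carrier G \<times> carrier G \<times> UNIV, monoid.mult = wmult G,
          monoid.one = (\<one>\<^bsub>G\<^esub>, \<one>\<^bsub>G\<^esub>, False)\<rparr>"

lemma W_simps[simp]: "carrier (W G) = carrier G \<times> carrier G \<times> UNIV"
  "(x1,y1,s1) \<otimes>\<^bsub>W G\<^esub> (x2,y2,s2) = (if s1 then (x1 \<otimes>\<^bsub>G\<^esub> y2, y1 \<otimes>\<^bsub>G\<^esub> x2, s1 \<noteq> s2)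
     else (x1 \<otimes>\<^bsub>G\<^esub> x2, y1 \<otimes>\<^bsub>G\<^esub> y2, s1 \<noteq> s2))"
  "\<one>\<^bsub>W G\<^esub> = (\<one>\<^bsub>G\<^esub>, \<one>\<^bsub>G\<^esub>, False)"
  by (auto simp: W_def wmult_def)

lemma W_group: assumes "group G" shows "group (W G)"
proof -
  interpret G: group G by fact
  show ?thesis
  proof (rule groupI)
    fix x y assume "x \<in> carrier (W G)" "y \<in> carrier (W G)"
    then show "x \<otimes>\<^bsub>W G\<^esub> y \<in> carrier (W G)" by (cases x; cases y) auto
  next
    show "\<one>\<^bsub>W G\<^esub> \<in> carrier (W G)" by simp
  next
    fix x y z assume "x \<in> carrier (W G)" "y \<in> carrier (W G)" "z \<in> carrier (W G)"
    then show "x \<otimes>\<^bsub>W G\<^esub> y \<otimes>\<^bsub>W G\<^esub> z = x \<otimes>\<^bsub>W G\<^esub> (y \<otimes>\<^bsub>W G\<^esub> z)"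
      by (cases x; cases y; cases z) (auto simp: G.m_assoc)
  next
    fix x assume "x \<in> carrier (W G)"
    then show "\<one>\<^bsub>W G\<^esub> \<otimes>\<^bsub>W G\<^esub> x = x" by (cases x) auto
  next
    fix x assume "x \<in> carrier (W G)"
    then show "\<exists>y\<in>carrier (W G). y \<otimes>\<^bsub>W G\<^esub> x = \<one>\<^bsub>W G\<^esub>"
    proof (cases x)
      case (fields a b s)
      show ?thesis
      proof (cases s)
        case True
        with fields \<open>x \<in> _\<close> show ?thesis
          by (intro bexI[of _ "(inv\<^bsub>G\<^esub> b, inv\<^bsub>G\<^esub> a, True)"]) auto
      next
        case False
        with fields \<open>x \<in> _\<close> show ?thesis
          by (intro bexI[of _ "(inv\<^bsub>G\<^esub> a, inv\<^bsub>G\<^esub> b, False)"]) auto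
      qed
    qed
  qed
qed


lemma W_inv:
  assumes "group G" "x \<in> carrier G" "y \<in> carrier G"
  shows "inv\<^bsub>W G\<^esub> (x,y,s) = (if s then (inv\<^bsub>G\<^esub> y, inv\<^bsub>G\<^esub> x, True) else (inv\<^bsub>G\<^esub> x, inv\<^bsub>G\<^esub> y, False))"
proof -
  interpret G: group G by fact
  interpret H: group "W G" using W_group[OF assms(1)] .
  show ?thesis
    by (rule H.inv_equality) (use assms in auto)
qed

theorem claim2p18:
  fixes G :: "'a monoid"
  assumes "locally_finite_group G"
  shows "\<exists>(H :: ('a \<times> 'a \<times> bool) monoid) \<phi> a.
           locally_finite_group H \<and>
           \<phi> \<in> hom G H \<and> inj_on \<phi> (carrier G) \<and>
           a \<in> carrier H \<and>
           carrier H = generate H (\<phi> ` carrier G \<union> {a}) \<and>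
           (\<forall>b \<in> carrier G - {\<one>\<^bsub>G\<^esub>}. a \<otimes>\<^bsub>H\<^esub> \<phi> b \<noteq> \<phi> b \<otimes>\<^bsub>H\<^esub> a) \<and>
           group.ord H a = 2 \<and>
           (\<forall>x \<in> carrier G. \<forall>y \<in> carrier G.
              \<phi> x \<otimes>\<^bsub>H\<^esub> (inv\<^bsub>H\<^esub> a \<otimes>\<^bsub>H\<^esub> \<phi> y \<otimes>\<^bsub>H\<^esub> a)
              = (inv\<^bsub>H\<^esub> a \<otimes>\<^bsub>H\<^esub> \<phi> y \<otimes>\<^bsub>H\<^esub> a) \<otimes>\<^bsub>H\<^esub> \<phi> x)"
proof -
  have grp: "group G" and lf: "\<And>S. S \<subseteq> carrier G \<Longrightarrow> finite S \<Longrightarrow> finite (generate G S)"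
    using assms unfolding locally_finite_group_def by auto
  interpret G: group G by (rule grp)
  define H where "H = W G"
  have grpH: "group H" unfolding H_def by (rule W_group[OF grp])
  interpret H: group H by (rule grpH)
  define \<phi> where "\<phi> = (\<lambda>x::'a. (x, \<one>\<^bsub>G\<^esub>, False))"
  define a where "a = (\<one>\<^bsub>G\<^esub>, \<one>\<^bsub>G\<^esub>, True)"
  have aC: "a \<in> carrier H" unfolding a_def H_def by simp
  have aa: "a \<otimes>\<^bsub>H\<^esub> a = \<one>\<^bsub>H\<^esub>" unfolding a_def H_def by simp
  have inva: "inv\<^bsub>H\<^esub> a = a" using H.inv_equality[OF aa aC aC] .
  have conj: "inv\<^bsub>H\<^esub> a \<otimes>\<^bsub>H\<^esub> \<phi> y \<otimes>\<^bsub>H\<^esub> a = (\<one>\<^bsub>G\<^esub>, y, False)" if "y \<in> carrier G" for y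
    using that unfolding inva unfolding a_def \<phi>_def H_def by simp
  have phiC: "\<phi> x \<in> carrier H" if "x \<in> carrier G" for x
    using that unfolding \<phi>_def H_def by simp
  have hom: "\<phi> \<in> hom G H"
    by (rule homI) (auto simp: \<phi>_def H_def)
  have inj: "inj_on \<phi> (carrier G)" unfolding \<phi>_def inj_on_def by simp
  have gen: "carrier H = generate H (\<phi> ` carrier G \<union> {a})"
  proof
    show "generate H (\<phi> ` carrier G \<union> {a}) \<subseteq> carrier H"
      using phiC aC by (intro H.generate_incl) auto
  next
    show "carrier H \<subseteq> generate H (\<phi> ` carrier G \<union> {a})"
    proof
      fix z assume z: "z \<in> carrier H"
      obtain x y s where zz: "z = (x,y,s)" by (cases z)
      with z have xy: "x \<in> carrier G" "y \<in> carrier G" unfolding H_def by auto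
      let ?g = "generate H (\<phi> ` carrier G \<union> {a})"
      have A: "a \<in> ?g" by (rule generate.incl) simp
      have P: "\<phi> u \<in> ?g" if "u \<in> carrier G" for u by (rule generate.incl) (use that in simp)
      have "inv\<^bsub>H\<^esub> a \<otimes>\<^bsub>H\<^esub> \<phi> y \<otimes>\<^bsub>H\<^esub> a \<in> ?g"
        unfolding inva by (intro generate.eng A P xy)
      then have Q: "(\<one>\<^bsub>G\<^esub>, y, False) \<in> ?g" using conj[OF xy(2)] by simp
      have R: "\<phi> x \<otimes>\<^bsub>H\<^esub> (\<one>\<^bsub>G\<^esub>, y, False) \<in> ?g" by (intro generate.eng P Q xy)
      have R': "\<phi> x \<otimes>\<^bsub>H\<^esub> (\<one>\<^bsub>G\<^esub>, y, False) = (x, y, False)"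
        using xy unfolding \<phi>_def H_def by simp
      have S: "(x, y, False) \<otimes>\<^bsub>H\<^esub> a = (x, y, True)"
        using xy unfolding a_def H_def by simp
      show "z \<in> ?g"
      proof (cases s)
        case True
        have "(x, y, False) \<otimes>\<^bsub>H\<^esub> a \<in> ?g" using R R' A by (metis generate.eng)
        then show ?thesis using S zz True by simp
      next
        case False then show ?thesis using R R' zz by simp
      qed
    qed
  qed
  have noncomm: "\<forall>b \<in> carrier G - {\<one>\<^bsub>G\<^esub>}. a \<otimes>\<^bsub>H\<^esub> \<phi> b \<noteq> \<phi> b \<otimes>\<^bsub>H\<^esub> a"
    unfolding a_def \<phi>_def H_def by auto
  have ord: "group.ord H a = 2"
  proof -
    have "a [^]\<^bsub>H\<^esub> (2::nat) = \<one>\<^bsub>H\<^esub>"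
      using aa aC by (simp add: numeral_2_eq_2)
    then have d: "H.ord a dvd 2" using H.pow_eq_id[OF aC] by simp
    have "a \<noteq> \<one>\<^bsub>H\<^esub>" unfolding a_def H_def by simp
    then have "H.ord a \<noteq> 1" using H.ord_eq_1[OF aC] by simp
    moreover have "H.ord a \<noteq> 0" using d by (metis dvd_0_left_iff zero_neq_numeral)
    moreover have "H.ord a \<le> 2" using d by (simp add: dvd_imp_le)
    ultimately show ?thesis by linarith
  qed
  have comm: "\<forall>x \<in> carrier G. \<forall>y \<in> carrier G.
              \<phi> x \<otimes>\<^bsub>H\<^esub> (inv\<^bsub>H\<^esub> a \<otimes>\<^bsub>H\<^esub> \<phi> y \<otimes>\<^bsub>H\<^esub> a)
              = (inv\<^bsub>H\<^esub> a \<otimes>\<^bsub>H\<^esub> \<phi> y \<otimes>\<^bsub>H\<^esub> a) \<otimes>\<^bsub>H\<^esub> \<phi> x"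
    using conj unfolding \<phi>_def H_def by simp
  have lfH: "locally_finite_group H"
    unfolding locally_finite_group_def
  proof (intro conjI allI impI grpH)
    fix S assume S: "S \<subseteq> carrier H \<and> finite S"
    define T where "T = fst ` S \<union> (fst \<circ> snd) ` S"
    have T: "T \<subseteq> carrier G" "finite T"
      using S unfolding T_def H_def by auto
    define K where "K = generate G T"
    have Kf: "finite K" unfolding K_def by (rule lf[OF T])
    have Ks: "subgroup K G" unfolding K_def using G.generate_is_subgroup T(1) .
    have TK: "T \<subseteq> K" unfolding K_def by (rule subsetI, rule generate.incl)
    define E where "E = K \<times> K \<times> (UNIV :: bool set)"
    have Ef: "finite E" unfolding E_def using Kf by simp
    have KC: "K \<subseteq> carrier G" using Ks subgroup.subset by blast
    have Esub: "subgroup E H"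
    proof
      show "E \<subseteq> carrier H" using KC unfolding E_def H_def by auto
    next
      fix u v assume uv: "u \<in> E" "v \<in> E"
      obtain x1 y1 s1 where uu: "u = (x1,y1,s1)" by (cases u)
      obtain x2 y2 s2 where vv: "v = (x2,y2,s2)" by (cases v)
      have K4: "x1 \<in> K" "y1 \<in> K" "x2 \<in> K" "y2 \<in> K" using uv uu vv unfolding E_def by auto
      show "u \<otimes>\<^bsub>H\<^esub> v \<in> E"
        unfolding E_def H_def uu vv
        using subgroup.m_closed[OF Ks] K4 by simp
    next
      show "\<one>\<^bsub>H\<^esub> \<in> E" unfolding E_def H_def using subgroup.one_closed[OF Ks] by simp
    next
      fix u assume u: "u \<in> E"
      obtain x y s where uu: "u = (x,y,s)" by (cases u)
      with u have "x \<in> K" "y \<in> K" unfolding E_def by auto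
      moreover have "x \<in> carrier G" "y \<in> carrier G" using calculation KC by auto
      ultimately show "inv\<^bsub>H\<^esub> u \<in> E"
        unfolding uu H_def E_def
        by (simp add: W_inv[OF grp] subgroup.m_inv_closed[OF Ks])
    qed
    have "S \<subseteq> E"
    proof
      fix z assume zS: "z \<in> S"
      obtain x y s where zz: "z = (x,y,s)" by (cases z)
      have "x \<in> T" "y \<in> T" unfolding T_def using zS zz by (force, force)
      then show "z \<in> E" unfolding E_def zz using TK by auto
    qed
    then have "generate H S \<subseteq> E" using H.generate_subgroup_incl Esub by blast
    then show "finite (generate H S)" using Ef finite_subset by blast
  qed
  show ?thesis
    using lfH hom inj aC gen noncomm ord comm by blast
qed

end
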